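(* Assume the setting described in the context. Let $h\in(0,h_0]$, $N\ge1$, $\Delta t=T/N$, and let $u_1^h,\dots,u_N^h\in V^h_m$ be any solutions of the fully discrete scheme starting from $u_0^h$. Then there exists a positive constant $c$, independent of $h$ and $\Delta t$, such that \[\max_{i=1,\dots,N}\|u_i^h\|^2_{L^2(\Omega;\mathbb{R}^m)}+\sum_{i=1}^N\int_\Omega|u_i^h-u_{i-1}^h|^2\,{\rm d}x+\Delta t\sum_{i=1}^N\int_\Omega a(Du_i^h):Du_i^h\,{\rm d}x\le c\big(\|u_0^h\|^2_{L^2(\Omega;\mathbb{R}^m)}+T\|F\|^2_{L^2(Q_T;\mathbb{R}^m)}\big).\] Moreover $a(\xi):\xi\ge0$ for all $\xi\in\mathbb{R}^{m\times n}$, so every term on the left-hand side is nonnegative, and the right-hand side is bounded above by a constant independent of $h$ and $\Delta t$.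
   Context: Setting: $n,m\ge1$, $T>0$, $\Omega\subset\mathbb{R}^n$ a bounded Lipschitz polytope, $Q_T=(0,T)\times\Omega$; $p_i>\max\{1,\frac{2n}{n+2}\}$ ($i=1,\dots,m$), $p=\min_ip_i$, $q=\max_ip_i$, $q-p<1$, $\hat q=\max\{q,2\}$, $p'=p/(p-1)$; $u_0\in L^2(\Omega;\mathbb{R}^m)$; $F\in L^{p'}(Q_T;\mathbb{R}^m)\cap L^2(Q_T;\mathbb{R}^m)$; $B\in\mathbb{R}^{m\times m}$ constant with $Bv\cdot v\ge0$ for all $v$. $a:\mathbb{R}^{m\times n}\to\mathbb{R}^{m\times n}$ is locally Lipschitz, $a(A)=K(A)A$ with $K$ continuous and $c_0\sum_i(\mu_i^2+|A_i|^2)^{(p_i-2)/2}\le K(A)\le c_1\sum_i(\mu_i^2+|A_i|^2)^{(p_i-2)/2}$, $0<c_0\le c_1$, $A_i$ the $i$-th row of $A$, $\mu_i\in\mathbb{R}$ with $\mu_i\neq0$ if $p_i<2$. $A:B$ is the Frobenius inner product. Finite elements: $\{\mathcal{T}_h\}_{h\in(0,h_0]}$ shape-regular simplicial subdivisions of $\overline\Omega$ of mesh size $h$; $V^h=\{v\in W^{1,\infty}_0(\Omega):v|_\Delta\text{ affine }\forall\Delta\in\mathcal{T}_h\}$, $V^h_m=(V^h)^m$; the $L^2$-orthogonal projector onto $V^h_m$ is stable in $W^{1,\hat q}_0(\Omega;\mathbb{R}^m)$ uniformly in $h$; $u_0^h\in V^h_m$ with $u_0^h\to u_0$ in $L^2(\Omega;\mathbb{R}^m)$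 as $h\to0_+$. Fully discrete scheme: with $t_i=i\Delta t$ and $F_i(x)=\frac{1}{\Delta t}\int_{t_{i-1}}^{t_i}F(t,x)\,{\rm d}t$, given $u_i^h\in V^h_m$ find $u_{i+1}^h\in V^h_m$ with $\int_\Omega\frac{u_{i+1}^h-u_i^h}{\Delta t}\cdot\phi^h+a(Du_{i+1}^h):D\phi^h+Bu_{i+1}^h\cdot\phi^h\,{\rm d}x=\int_\Omega F_{i+1}\cdot\phi^h\,{\rm d}x$ for all $\phi^h\in V^h_m$, $i=0,\dots,N-1$. *)

theory Defs
  imports "HOL-Analysis.Analysis"
begin

text \<open>Real power with the convention b^0 = 1 (Isabelle has 0 powr 0 = 0).\<close>
definition pw :: "real \<Rightarrow> real \<Rightarrow> real" where
  "pw b e = (if e = 0 then 1 else b powr e)"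

definition lipschitz_domain :: "(real^'n) set \<Rightarrow> bool" where
  "lipschitz_domain \<Omega> \<longleftrightarrow> open \<Omega> \<and> bounded \<Omega> \<and> \<Omega> \<noteq> {} \<and>
     (\<forall>x0\<in>frontier \<Omega>. \<exists>r>0. \<exists>e::real^'n. \<exists>g::real^'n \<Rightarrow> real. \<exists>L.
        norm e = 1 \<and> (\<forall>y z. \<bar>g y - g z\<bar> \<le> L * norm (y - z)) \<and>
        \<Omega> \<inter> ball x0 r = {x \<in> ball x0 r. x \<bullet> e < g (x - (x \<bullet> e) *\<^sub>R e)})"

definition lipschitz_polytope :: "(real^'n) set \<Rightarrow> bool" where
  "lipschitz_polytope \<Omega> \<longleftrightarrow> lipschitz_domain \<Omega> \<and>
     (\<exists>\<P>. finite \<P> \<and> (\<forall>P\<in>\<P>. polytope P) \<and> closure \<Omega> = \<Union>\<P>)"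

definition simplicial_subdivision :: "(real^'n) set set \<Rightarrow> (real^'n) set \<Rightarrow> real \<Rightarrow> bool" where
  "simplicial_subdivision \<T> \<Omega> h \<longleftrightarrow> triangulation \<T> \<and> \<T> \<noteq> {} \<and>
     (\<forall>S\<in>\<T>. int CARD('n) simplex S) \<and> \<Union>\<T> = closure \<Omega> \<and>
     h = Max (diameter ` \<T>)"

definition inradius :: "(real^'n) set \<Rightarrow> real" where
  "inradius S = Sup {r. r \<ge> 0 \<and> (\<exists>x. ball x r \<subseteq> S)}"

definition shape_regular_family :: "(real \<Rightarrow> (real^'n) set set) \<Rightarrow> real \<Rightarrow> bool" where
  "shape_regular_family \<T> h0 \<longleftrightarrow>
     (\<exists>\<sigma>. \<forall>h\<in>{0<..h0}. \<forall>S\<in>\<T> h. diameter S \<le> \<sigma> * inradius S)"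

text \<open>V^h: continuous functions on R^n vanishing outside Omega (hence on the boundary;
Lipschitz, i.e. in W^{1,infinity}_0), affine on every simplex.\<close>
definition Vh :: "(real^'n) set set \<Rightarrow> (real^'n) set \<Rightarrow> (real^'n \<Rightarrow> real) \<Rightarrow> bool" where
  "Vh \<T> \<Omega> v \<longleftrightarrow> continuous_on UNIV v \<and> (\<forall>x. x \<notin> \<Omega> \<longrightarrow> v x = 0) \<and>
     (\<forall>S\<in>\<T>. \<exists>b c. \<forall>x\<in>S. v x = b \<bullet> x + c)"

definition Vhm :: "(real^'n) set set \<Rightarrow> (real^'n) set \<Rightarrow> (real^'n \<Rightarrow> real^'m) \<Rightarrow> bool" where
  "Vhm \<T> \<Omega> u \<longleftrightarrow> (\<forall>k. Vh \<T> \<Omega> (\<lambda>x. u x $ k))"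

definition Lp_on :: "'a measure \<Rightarrow> 'a set \<Rightarrow> real \<Rightarrow> ('a \<Rightarrow> 'b::euclidean_space) \<Rightarrow> bool" where
  "Lp_on M A r f \<longleftrightarrow> (\<lambda>x. indicator A x *\<^sub>R f x) \<in> borel_measurable M \<and>
     integrable M (\<lambda>x. indicator A x * norm (f x) powr r)"

definition Lp_norm :: "real \<Rightarrow> (real^'n \<Rightarrow> 'b::euclidean_space) \<Rightarrow> real" where
  "Lp_norm r f = (integral\<^sup>L lebesgue (\<lambda>x. norm (f x) powr r)) powr (1 / r)"

definition L2sq :: "(real^'n) set \<Rightarrow> (real^'n \<Rightarrow> 'b::euclidean_space) \<Rightarrow> real" where
  "L2sq \<Omega> f = (LINT x:\<Omega>|lebesgue. (norm (f x))\<^sup>2)"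

definition C1c :: "(real^'n \<Rightarrow> real) \<Rightarrow> (real^'n \<Rightarrow> real^'n) \<Rightarrow> bool" where
  "C1c \<phi> g \<longleftrightarrow> (\<forall>x. (\<phi> has_derivative (\<lambda>y. g x \<bullet> y)) (at x)) \<and> continuous_on UNIV g \<and>
     (\<exists>C. compact C \<and> (\<forall>x. x \<notin> C \<longrightarrow> \<phi> x = 0))"

text \<open>G is the weak Jacobian of v on R^n: G\$k\$j = weak partial_j of v_k.\<close>
definition weak_jacobian :: "(real^'n \<Rightarrow> real^'m) \<Rightarrow> (real^'n \<Rightarrow> real^'n^'m) \<Rightarrow> bool" where
  "weak_jacobian v G \<longleftrightarrow> (\<forall>k j \<phi> g. C1c \<phi> g \<longrightarrow>
     integrable lebesgue (\<lambda>x. v x $ k * g x $ j) \<and> integrable lebesgue (\<lambda>x. G x $ k $ j * \<phi> x) \<and>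
     integral\<^sup>L lebesgue (\<lambda>x. v x $ k * g x $ j) = - integral\<^sup>L lebesgue (\<lambda>x. G x $ k $ j * \<phi> x))"

text \<open>W^{1,r}_0(Omega;R^m), realised by zero extension to R^n.\<close>
definition W10 :: "(real^'n) set \<Rightarrow> real \<Rightarrow> (real^'n \<Rightarrow> real^'m) \<Rightarrow> bool" where
  "W10 \<Omega> r v \<longleftrightarrow> (\<forall>x. x \<notin> \<Omega> \<longrightarrow> v x = 0) \<and> Lp_on lebesgue UNIV r v \<and>
     (\<exists>G. weak_jacobian v G \<and> Lp_on lebesgue UNIV r G)"

definition projection_stable ::
  "(real^'n) set \<Rightarrow> (real \<Rightarrow> (real^'n) set set) \<Rightarrow> real \<Rightarrow> real \<Rightarrow> (real^'m) itself \<Rightarrow> bool" where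
  "projection_stable \<Omega> \<T> h0 r _ \<longleftrightarrow> (\<exists>C. \<forall>h\<in>{0<..h0}. \<forall>(v::real^'n \<Rightarrow> real^'m) G w Gw.
      W10 \<Omega> r v \<and> weak_jacobian v G \<and> Lp_on lebesgue UNIV r G \<and>
      Vhm (\<T> h) \<Omega> w \<and>
      (\<forall>\<phi>. Vhm (\<T> h) \<Omega> \<phi> \<longrightarrow> (LINT x:\<Omega>|lebesgue. (v x - w x) \<bullet> \<phi> x) = 0) \<and>
      weak_jacobian w Gw
      \<longrightarrow> Lp_norm r w + Lp_norm r Gw \<le> C * (Lp_norm r v + Lp_norm r G))"

definition F_avg :: "(real \<Rightarrow> real^'n \<Rightarrow> real^'m) \<Rightarrow> real \<Rightarrow> nat \<Rightarrow> real^'n \<Rightarrow> real^'m" where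
  "F_avg F dt i x = (1 / dt) *\<^sub>R (LINT t:{(real i - 1) * dt .. real i * dt}|lborel. F t x)"

definition fd_scheme ::
  "(real^'n) set set \<Rightarrow> (real^'n) set \<Rightarrow> (real^'n^'m \<Rightarrow> real^'n^'m) \<Rightarrow> real^'m^'m \<Rightarrow>
   (real \<Rightarrow> real^'n \<Rightarrow> real^'m) \<Rightarrow> real \<Rightarrow> nat \<Rightarrow> (nat \<Rightarrow> real^'n \<Rightarrow> real^'m) \<Rightarrow> bool" where
  "fd_scheme \<T> \<Omega> a B F dt N u \<longleftrightarrow> (\<forall>i<N. \<forall>\<phi>. Vhm \<T> \<Omega> \<phi> \<longrightarrow>
     (LINT x:\<Omega>|lebesgue. ((1 / dt) *\<^sub>R (u (Suc i) x - u i x)) \<bullet> \<phi> x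
        + a (jacobian (u (Suc i)) (at x)) \<bullet> jacobian \<phi> (at x)
        + (B *v u (Suc i) x) \<bullet> \<phi> x)
     = (LINT x:\<Omega>|lebesgue. F_avg F dt (Suc i) x \<bullet> \<phi> x))"

definition QT :: "real \<Rightarrow> (real^'n) set \<Rightarrow> (real \<times> (real^'n)) set" where
  "QT T \<Omega> = {(t, x). 0 < t \<and> t < T \<and> x \<in> \<Omega>}"

end

theory Submission
  imports Defs
begin



lemma Vhm_cont:
  assumes "Vhm \<T> \<Omega> u" shows "continuous_on UNIV u"
proof -
  have "\<And>k. continuous_on UNIV (\<lambda>x. u x $ k)" using assms by (simp add: Vhm_def Vh_def)
  hence "continuous_on UNIV (\<lambda>x. \<chi> k. u x $ k)" by (intro continuous_on_vec_lambda)
  thus ?thesis by simp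
qed

lemma Vhm_zero:
  assumes "Vhm \<T> \<Omega> u" "x \<notin> \<Omega>" shows "u x = 0"
  using assms by (simp add: Vhm_def Vh_def vec_eq_iff)

lemma cont_set_int:
  fixes f :: "real^'n \<Rightarrow> real"
  assumes "continuous_on UNIV f" "bounded \<Omega>" "\<Omega> \<in> sets lebesgue"
  shows "set_integrable lebesgue \<Omega> f"
proof -
  have i: "integrable lborel (\<lambda>x. indicator (closure \<Omega>) x *\<^sub>R f x)"
    by (rule borel_integrable_compact) (auto simp: compact_closure assms intro: continuous_on_subset[OF assms(1)])
  hence "integrable lebesgue (\<lambda>x. indicator (closure \<Omega>) x *\<^sub>R f x)"
    using integrable_completion borel_measurable_integrable by blast
  hence "set_integrable lebesgue (closure \<Omega>) f" by (simp add: set_integrable_def)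
  thus ?thesis by (rule set_integrable_subset) (auto simp: assms closure_subset)
qed

lemma Vhm_affine:
  fixes u :: "real^'n \<Rightarrow> real^'m"
  assumes "Vhm \<T> \<Omega> u" "S \<in> \<T>"
  shows "\<exists>M. \<forall>x\<in>interior S. jacobian u (at x) = M"
proof -
  have "\<forall>k. \<exists>b c. \<forall>x\<in>S. u x $ k = b \<bullet> x + c" using assms by (auto simp: Vhm_def Vh_def)
  then obtain b c where bc: "\<And>k x. x \<in> S \<Longrightarrow> u x $ k = b k \<bullet> x + c k" by metis
  define A :: "real^'n^'m" where "A = (\<chi> k j. b k $ j)"
  define cc :: "real^'m" where "cc = (\<chi> k. c k)"
  have L: "\<And>x. x \<in> S \<Longrightarrow> u x = A *v x + cc"
    by (simp add: vec_eq_iff bc A_def cc_def matrix_vector_mult_def inner_vec_def mult.commute)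
  have "\<forall>x\<in>interior S. jacobian u (at x) = A"
  proof
    fix x assume x: "x \<in> interior S"
    have d: "((\<lambda>y. A *v y + cc) has_derivative (*v) A) (at x)"
      by (intro has_derivative_add_const bounded_linear_imp_has_derivative matrix_vector_mul_bounded_linear)
    have eq: "\<And>y. y \<in> interior S \<Longrightarrow> A *v y + cc = u y" using L interior_subset by (metis subsetD)
    have "(u has_derivative (*v) A) (at x)"
      using has_derivative_transform_within_open[OF d open_interior x eq] .
    thus "jacobian u (at x) = A"
      by (simp add: jacobian_def frechet_derivative_at[symmetric] matrix_of_matrix_vector_mul)
  qed
  thus ?thesis by blast
qed

lemma jac_int:
  fixes u :: "real^'n \<Rightarrow> real^'m" and g :: "real^'n^'m \<Rightarrow> real"
  assumes V: "Vhm \<T> \<Omega> u" and fin: "finite \<T>" and cv: "\<forall>S\<in>\<T>. convex S"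
    and cov: "\<Omega> \<subseteq> \<Union>\<T>" and bd: "bounded \<Omega>" and op: "open \<Omega>"
  shows "set_integrable lebesgue \<Omega> (\<lambda>x. g (jacobian u (at x)))"
proof -
  obtain M where M: "\<And>S x. S \<in> \<T> \<Longrightarrow> x \<in> interior S \<Longrightarrow> jacobian u (at x) = M S"
    using Vhm_affine[OF V] by metis
  define E where "E = \<Union>(interior ` \<T>)"
  define h where "h = (\<lambda>x. g (jacobian u (at x)))"
  have oE: "open E" unfolding E_def by auto
  have cE: "continuous_on E h" unfolding E_def
  proof (rule continuous_on_open_Union)
    fix s assume "s \<in> interior ` \<T>"
    then obtain S where S: "S \<in> \<T>" "s = interior S" by auto
    show "open s" using S by auto
    have "continuous_on s (\<lambda>x. g (M S))" by simp
    thus "continuous_on s h" by (rule continuous_on_cong[THEN iffD1, rotated 2]) (use S M h_def in auto)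
  qed
  define Bd where "Bd = (\<Sum>S\<in>\<T>. \<bar>g (M S)\<bar>)"
  have bnd: "\<And>x. x \<in> E \<Longrightarrow> \<bar>h x\<bar> \<le> Bd"
  proof -
    fix x assume "x \<in> E"
    then obtain S where S: "S \<in> \<T>" "x \<in> interior S" unfolding E_def by auto
    have "\<bar>h x\<bar> = \<bar>g (M S)\<bar>" using M S h_def by simp
    also have "\<dots> \<le> Bd" unfolding Bd_def using S fin by (intro member_le_sum) auto
    finally show "\<bar>h x\<bar> \<le> Bd" .
  qed
  have meas: "(\<lambda>x. indicator E x *\<^sub>R h x) \<in> borel_measurable borel"
    by (rule borel_measurable_continuous_on_indicator) (use oE cE in auto)
  have meas2: "(\<lambda>x. indicator \<Omega> x *\<^sub>R (indicator E x *\<^sub>R h x)) \<in> borel_measurable lebesgue"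
  proof -
    have "(\<lambda>x. indicator \<Omega> x *\<^sub>R (indicator E x *\<^sub>R h x)) \<in> borel_measurable borel"
      by (rule borel_measurable_scaleR[OF _ meas]) (use op in auto)
    thus ?thesis by (intro measurable_completion) (simp add: measurable_lborel1)
  qed
  have lm: "\<Omega> \<in> lmeasurable" using bd op by (intro bounded_set_imp_lmeasurable) auto
  have em: "\<Omega> \<in> sets lebesgue" "emeasure lebesgue \<Omega> < \<infinity>" using lm unfolding fmeasurable_def by blast+
  have "integrable lebesgue (\<lambda>x. indicator \<Omega> x * Bd)"
    by (intro integrable_mult_left integrable_real_indicator em)
  hence i1: "integrable lebesgue (\<lambda>x. indicator \<Omega> x *\<^sub>R (indicator E x *\<^sub>R h x))"
    by (rule Bochner_Integration.integrable_bound[OF _ meas2]) (auto simp: indicator_def intro!: AE_I2 order_trans[OF bnd])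
  hence i2: "(\<lambda>x. indicator E x *\<^sub>R h x) absolutely_integrable_on \<Omega>"
    by (simp add: set_integrable_def)
  have neg: "negligible (\<Union>(frontier ` \<T>))"
    using fin cv by (intro negligible_Union) (auto intro: negligible_convex_frontier)
  have "h absolutely_integrable_on \<Omega>"
  proof (rule absolutely_integrable_spike[OF i2 neg])
    fix x assume x: "x \<in> \<Omega> - \<Union>(frontier ` \<T>)"
    then obtain S where S: "S \<in> \<T>" "x \<in> S" using cov by auto
    have "x \<in> interior S" using x S closure_subset[of S] by (auto simp: frontier_def)
    hence "x \<in> E" using S E_def by auto
    thus "h x = indicator E x *\<^sub>R h x" by simp
  qed
  thus ?thesis by (simp add: h_def)
qed


lemma PS: "pair_sigma_finite (lborel::'a::euclidean_space measure) (lborel::'b::euclidean_space measure)"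
  by (simp add: pair_sigma_finite_def lborel.sigma_finite_measure_axioms)

lemma young: "2 * (y \<bullet> w) \<le> lam * (norm y)\<^sup>2 + (norm w)\<^sup>2 / lam" if "lam > 0" for y w :: "real^'m" and lam :: real
proof -
  have "0 \<le> (norm (lam *\<^sub>R y - w))\<^sup>2" by simp
  also have "\<dots> = lam\<^sup>2 * (norm y)\<^sup>2 - 2 * lam * (y \<bullet> w) + (norm w)\<^sup>2"
    unfolding power2_norm_eq_inner by (simp add: inner_diff_left inner_diff_right inner_commute[of w y] power2_eq_square algebra_simps)
  finally have "2 * lam * (y \<bullet> w) \<le> lam * (lam * (norm y)\<^sup>2 + (norm w)\<^sup>2 / lam)"
    using that by (simp add: algebra_simps power2_eq_square)
  thus ?thesis using that by (simp add: mult.assoc)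
qed

lemma F_step:
  fixes F :: "real \<Rightarrow> real^'n \<Rightarrow> real^'m" and w :: "real^'n \<Rightarrow> real^'m"
    and T :: real and \<Omega> :: "(real^'n) set"
  defines "Phi \<equiv> (\<lambda>z. indicator (QT T \<Omega>) z * (norm (F (fst z) (snd z)))\<^sup>2)"
  assumes meas: "(\<lambda>z. indicator (QT T \<Omega>) z *\<^sub>R (case z of (t,x) \<Rightarrow> F t x)) \<in> borel_measurable (lborel \<Otimes>\<^sub>M lborel)"
    and intPhi: "integrable (lborel \<Otimes>\<^sub>M lborel) Phi"
    and wc: "continuous_on UNIV w" and bd: "bounded \<Omega>" and op: "open \<Omega>"
    and i1: "1 \<le> i" and dt: "dt > 0" and iT: "real i * dt \<le> T" and lam: "lam > 0"
  shows "(LINT x:\<Omega>|lebesgue. F_avg F dt i x \<bullet> w x) \<le>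
     lam / (2 * dt) * (\<integral>z. indicator ({(real i - 1) * dt<..<real i * dt} \<times> UNIV) z * Phi z \<partial>(lborel \<Otimes>\<^sub>M lborel))
     + L2sq \<Omega> w / (2 * lam)"
proof -
  define a where "a = (real i - 1) * dt"
  define b where "b = real i * dt"
  have ab: "0 \<le> a" "a < b" "b \<le> T" "b - a = dt" using i1 dt iT by (auto simp: a_def b_def algebra_simps)
  define Fq where "Fq = (\<lambda>z. indicator (QT T \<Omega>) z *\<^sub>R (case z of (t,x) \<Rightarrow> F t x))"
  define Phii where "Phii = (\<lambda>z. indicator ({a<..<b} \<times> (UNIV::(real^'n) set)) z * Phi z)"
  have setab: "{a<..<b} \<times> (UNIV::(real^'n) set) \<in> sets (lborel \<Otimes>\<^sub>M lborel)" by auto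
  have intPhii: "integrable (lborel \<Otimes>\<^sub>M lborel) Phii"
    unfolding Phii_def using integrable_real_mult_indicator[OF setab intPhi] by (simp add: mult.commute)
  have intS: "integrable (lborel \<Otimes>\<^sub>M lborel) (\<lambda>(x::real^'n, t::real). Phii (t, x))"
    using pair_sigma_finite.integrable_product_swap[OF PS intPhii] .
  define g where "g = (\<lambda>x. \<integral>t. Phii (t, x) \<partial>lborel)"
  have gint: "integrable lborel g" unfolding g_def using pair_sigma_finite.integrable_fst'[OF PS intS] by simp
  have gR: "integral\<^sup>L lborel g = integral\<^sup>L (lborel \<Otimes>\<^sub>M lborel) Phii"
    unfolding g_def using pair_sigma_finite.integral_fst'[OF PS intS] pair_sigma_finite.integral_product_swap[OF PS borel_measurable_integrable[OF intPhii]]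
    by simp
  have AEg: "AE x in lborel. integrable lborel (\<lambda>t. Phii (t, x))"
    using pair_sigma_finite.AE_integrable_fst'[OF PS intS] by simp
  have Phii_nn: "\<And>z. 0 \<le> Phii z" by (simp add: Phii_def Phi_def)
  have mFq0: "Fq \<in> borel_measurable (lborel \<Otimes>\<^sub>M lborel)" using meas by (simp add: Fq_def)
  have intI: "integrable lborel (indicator {a<..<b} :: real \<Rightarrow> real)"
    using ab by (intro integrable_real_indicator) (auto simp: emeasure_lborel_Ioo)
  have pw: "AE x in lborel. x \<in> \<Omega> \<longrightarrow> F_avg F dt i x \<bullet> w x \<le> lam / (2 * dt) * g x + (norm (w x))\<^sup>2 / (2 * lam)"
    using AEg
  proof eventually_elim
    case (elim x)
    show ?case
    proof
      assume xO: "x \<in> \<Omega>"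
      define H where "H = (\<lambda>t. indicator {a<..<b} t *\<^sub>R Fq (t,x))"
      have mFq: "(\<lambda>t. Fq (t,x)) \<in> borel_measurable lborel"
        using measurable_compose[OF measurable_Pair2'[of x lborel lborel] mFq0] by simp
      have mH: "H \<in> borel_measurable lborel" unfolding H_def using mFq
        by (intro borel_measurable_scaleR borel_measurable_indicator) auto
      have inQ: "\<And>t. t \<in> {a<..<b} \<Longrightarrow> (t,x) \<in> QT T \<Omega>" using ab xO by (auto simp: QT_def)
      have Hin: "\<And>t. t \<in> {a<..<b} \<Longrightarrow> H t = F t x" using inQ by (simp add: H_def Fq_def)
      have Hout: "\<And>t. t \<notin> {a<..<b} \<Longrightarrow> H t = 0" by (simp add: H_def)
      have PhiiV: "\<And>t. Phii (t,x) = indicator {a<..<b} t * (norm (H t))\<^sup>2"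
        using inQ Hin by (auto simp: Phii_def Phi_def indicator_def)
      have intH: "integrable lborel H"
      proof (rule Bochner_Integration.integrable_bound[OF _ mH])
        show "integrable lborel (\<lambda>t. indicator {a<..<b} t + Phii (t,x))"
          using intI elim by (intro Bochner_Integration.integrable_add) auto
        show "AE t in lborel. norm (H t) \<le> norm (indicator {a<..<b} t + Phii (t,x))"
        proof (intro AE_I2)
          fix t
          have h0: "0 \<le> (norm (H t) - 1)\<^sup>2" by simp
          have "2 * norm (H t) \<le> 1 + norm (H t) * norm (H t)" using h0 unfolding power2_eq_square by (simp add: algebra_simps)
          hence "norm (H t) \<le> 1 + (norm (H t))\<^sup>2" using norm_ge_zero[of "H t"] unfolding power2_eq_square by linarith
          thus "norm (H t) \<le> norm (indicator {a<..<b} t + Phii (t,x))"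
            using Hout[of t] Phii_nn[of "(t,x)"] by (cases "t \<in> {a<..<b}") (auto simp: PhiiV)
        qed
      qed
      define H' where "H' = (\<lambda>t. indicator {a..b} t *\<^sub>R F t x)"
      have H'eq: "H' = (\<lambda>t. if t = a then H' a else if t = b then H' b else H t)"
      proof
        fix t show "H' t = (if t = a then H' a else if t = b then H' b else H t)"
          using Hin[of t] Hout[of t] by (cases "t \<in> {a<..<b}") (auto simp: H'_def)
      qed
      have mH': "H' \<in> borel_measurable lborel"
        by (subst H'eq, intro measurable_If measurable_const mH) auto
      have AEab: "AE t in lborel. H' t = H t"
        using AE_lborel_singleton[of a] AE_lborel_singleton[of b]
        by eventually_elim (subst H'eq, auto)
      have intab: "(LINT t:{a..b}|lborel. F t x) = integral\<^sup>L lborel H"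
        unfolding set_lebesgue_integral_def using integral_cong_AE[OF mH' mH AEab] by (simp add: H'_def)
      have Favg: "F_avg F dt i x = (1 / dt) *\<^sub>R integral\<^sup>L lborel H"
        using intab by (simp add: F_avg_def a_def b_def)
      have "integral\<^sup>L lborel H \<bullet> w x = (\<integral>t. H t \<bullet> w x \<partial>lborel)"
        using intH by simp
      also have "\<dots> \<le> (\<integral>t. lam / 2 * Phii (t,x) + indicator {a<..<b} t * ((norm (w x))\<^sup>2 / (2 * lam)) \<partial>lborel)"
      proof (rule integral_mono)
        show "integrable lborel (\<lambda>t. H t \<bullet> w x)" using intH by (intro integrable_inner_left) 
        show "integrable lborel (\<lambda>t. lam / 2 * Phii (t,x) + indicator {a<..<b} t * ((norm (w x))\<^sup>2 / (2 * lam)))"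
          using elim intI by (intro Bochner_Integration.integrable_add integrable_mult_right integrable_mult_left) auto
        fix t
        show "H t \<bullet> w x \<le> lam / 2 * Phii (t,x) + indicator {a<..<b} t * ((norm (w x))\<^sup>2 / (2 * lam))"
        proof (cases "t \<in> {a<..<b}")
          case True
          have "2 * (H t \<bullet> w x) \<le> lam * (norm (H t))\<^sup>2 + (norm (w x))\<^sup>2 / lam" by (rule young[OF lam])
          thus ?thesis using True lam by (simp add: PhiiV field_simps)
        next
          case False thus ?thesis by (simp add: Hout PhiiV)
        qed
      qed
      also have "\<dots> = lam / 2 * g x + dt * ((norm (w x))\<^sup>2 / (2 * lam))"
        using elim intI ab by (subst Bochner_Integration.integral_add) (auto simp: g_def measure_lborel_Ioo)
      finally have "integral\<^sup>L lborel H \<bullet> w x \<le> lam / 2 * g x + dt * ((norm (w x))\<^sup>2 / (2 * lam))" .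
      thus "F_avg F dt i x \<bullet> w x \<le> lam / (2 * dt) * g x + (norm (w x))\<^sup>2 / (2 * lam)"
        using dt by (simp add: Favg field_simps)
    qed
  qed
  have gleb: "integrable lebesgue g" using gint integrable_completion borel_measurable_integrable by blast
  have gnn: "\<And>x. 0 \<le> g x" unfolding g_def by (intro integral_nonneg_AE) (simp add: Phii_nn)
  have Oleb: "\<Omega> \<in> sets lebesgue" using op by simp
  have wi: "set_integrable lebesgue \<Omega> (\<lambda>x. (norm (w x))\<^sup>2)"
    by (rule cont_set_int) (use wc bd Oleb in \<open>auto intro!: continuous_intros\<close>)
  have gi: "integrable lebesgue (\<lambda>x. indicator \<Omega> x *\<^sub>R g x)" by (rule integrable_mult_indicator[OF Oleb gleb])
  define r where "r = (\<lambda>x. lam / (2 * dt) * g x + (norm (w x))\<^sup>2 / (2 * lam))"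
  have eqf: "(\<lambda>x. indicator \<Omega> x *\<^sub>R r x) = (\<lambda>x. lam / (2 * dt) * (indicator \<Omega> x *\<^sub>R g x) + (indicator \<Omega> x *\<^sub>R (norm (w x))\<^sup>2) / (2 * lam))"
    by (auto simp: r_def indicator_def fun_eq_iff)
  have ri: "integrable lebesgue (\<lambda>x. indicator \<Omega> x *\<^sub>R r x)"
    unfolding eqf using gi wi[unfolded set_integrable_def]
    by (intro Bochner_Integration.integrable_add integrable_mult_right integrable_divide) auto
  have "(LINT x:\<Omega>|lebesgue. F_avg F dt i x \<bullet> w x) \<le> (\<integral>x. indicator \<Omega> x *\<^sub>R r x \<partial>lebesgue)"
    unfolding set_lebesgue_integral_def
  proof (rule integral_mono_AE'[OF ri])
    show "AE x in lebesgue. indicator \<Omega> x *\<^sub>R (F_avg F dt i x \<bullet> w x) \<le> indicator \<Omega> x *\<^sub>R r x"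
      using AE_completion[OF pw] by (auto elim!: eventually_mono simp: indicator_def r_def)
    show "AE x in lebesgue. 0 \<le> indicator \<Omega> x *\<^sub>R r x"
      using gnn lam dt by (intro AE_I2) (auto simp: r_def indicator_def)
  qed
  also have "(\<integral>x. indicator \<Omega> x *\<^sub>R r x \<partial>lebesgue) = lam / (2 * dt) * (\<integral>x. indicator \<Omega> x *\<^sub>R g x \<partial>lebesgue) + L2sq \<Omega> w / (2 * lam)"
    unfolding eqf using gi wi[unfolded set_integrable_def]
    by (subst Bochner_Integration.integral_add) (auto simp: L2sq_def set_lebesgue_integral_def)
  also have "(\<integral>x. indicator \<Omega> x *\<^sub>R g x \<partial>lebesgue) \<le> (\<integral>x. g x \<partial>lebesgue)"
    by (rule integral_mono[OF gi gleb]) (auto simp: indicator_def gnn)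
  also have "(\<integral>x. g x \<partial>lebesgue) = integral\<^sup>L (lborel \<Otimes>\<^sub>M lborel) Phii"
    using integral_completion[OF borel_measurable_integrable[OF gint]] gR by simp
  finally show ?thesis using lam dt by (simp add: Phii_def a_def b_def divide_right_mono mult_left_mono)
qed

lemma energy_alg:
  fixes e d A R :: "nat \<Rightarrow> real" and dt T S :: real and N :: nat
  assumes N: "N \<ge> 1" and dt: "dt > 0" and NT: "real N * dt = T"
    and step: "\<And>i. i \<in> {1..N} \<Longrightarrow> e i - e (i-1) + d i + 2*dt*A i \<le> 2*T*R i + dt/(2*T) * e i"
    and en: "\<And>i. 0 \<le> e i" and dn: "\<And>i. 0 \<le> d i" and An: "\<And>i. 0 \<le> A i" and Rn: "\<And>i. 0 \<le> R i"
    and RS: "(\<Sum>i=1..N. R i) \<le> S"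
  shows "(MAX i\<in>{1..N}. e i) + (\<Sum>i=1..N. d i) + dt * (\<Sum>i=1..N. A i) \<le> 8 * (e 0 + T * S)"
proof -
  have Tpos: "T > 0" using N dt NT by (metis of_nat_0_less_iff less_le_trans zero_less_one zero_less_mult_iff)
  have cum: "e k - e 0 + (\<Sum>i=1..k. d i + 2*dt*A i) \<le> 2*T*(\<Sum>i=1..k. R i) + dt/(2*T)*(\<Sum>i=1..k. e i)" if "k \<le> N" for k
    using that
  proof (induction k)
    case 0 thus ?case by simp
  next
    case (Suc k)
    have "Suc k \<in> {1..N}" using Suc.prems by auto
    from step[OF this] Suc.IH Suc.prems show ?case by (simp add: algebra_simps)
  qed
  define M where "M = (MAX i\<in>{1..N}. e i)"
  have ne: "{1..N} \<noteq> {}" using N by auto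
  have eM: "\<And>i. i\<in>{1..N} \<Longrightarrow> e i \<le> M" unfolding M_def by (rule Max_ge) auto
  have "M \<in> e ` {1..N}" unfolding M_def using ne by (intro Max_in) auto
  then obtain kM where kM: "kM \<in> {1..N}" "e kM = M" by auto
  have M0: "0 \<le> M" using en kM by metis
  have sumR: "(\<Sum>i=1..k. R i) \<le> S" if "k \<le> N" for k
  proof -
    have "(\<Sum>i=1..k. R i) \<le> (\<Sum>i=1..N. R i)" using that Rn by (intro sum_mono2) auto
    thus ?thesis using RS by linarith
  qed
  have S0: "0 \<le> S" using sumR[of 0] by simp
  have sumE: "(\<Sum>i=1..k. e i) \<le> real N * M" if "k \<le> N" for k
  proof -
    have "(\<Sum>i=1..k. e i) \<le> (\<Sum>i=1..N. e i)" using that en by (intro sum_mono2) auto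
    also have "\<dots> \<le> (\<Sum>i=1..N. M)" using eM by (intro sum_mono) auto
    finally show ?thesis by simp
  qed
  have half: "dt/(2*T)*(\<Sum>i=1..k. e i) \<le> M / 2" if "k \<le> N" for k
  proof -
    have "dt/(2*T)*(\<Sum>i=1..k. e i) \<le> dt/(2*T)*(real N * M)"
      using sumE[OF that] dt Tpos by (intro mult_left_mono) auto
    also have "\<dots> = M / 2" using NT Tpos by (simp add: field_simps)
    finally show ?thesis .
  qed
  have key: "e k + (\<Sum>i=1..k. d i + 2*dt*A i) \<le> e 0 + 2*T*S + M/2" if "k \<le> N" for k
  proof -
    have "2*T*(\<Sum>i=1..k. R i) \<le> 2*T*S" using sumR[OF that] Tpos by simp
    thus ?thesis using cum[OF that] half[OF that] by linarith
  qed
  have sDA: "0 \<le> (\<Sum>i=1..k. d i + 2*dt*A i)" for k using dn An dt by (intro sum_nonneg) (simp add: add_nonneg_nonneg)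
  have Mb: "M \<le> 2 * e 0 + 4*T*S" using key[of kM] kM sDA[of kM] by auto
  have sN: "(\<Sum>i=1..N. d i + 2*dt*A i) \<le> e 0 + 2*T*S + M/2" using key[of N] en[of N] by auto
  have "(\<Sum>i=1..N. d i) + dt * (\<Sum>i=1..N. A i) \<le> (\<Sum>i=1..N. d i + 2*dt*A i)"
  proof -
    have "dt * (\<Sum>i=1..N. A i) \<le> 2 * dt * (\<Sum>i=1..N. A i)" using dt An by (simp add: sum_nonneg)
    thus ?thesis by (simp add: sum.distrib sum_distrib_left)
  qed
  hence "M + (\<Sum>i=1..N. d i) + dt * (\<Sum>i=1..N. A i) \<le> 4 * e 0 + 8 * T * S" using sN Mb by linarith
  thus ?thesis using en[of 0] Tpos S0 unfolding M_def by (simp add: algebra_simps)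
qed

lemma step_ineq:
  fixes w v :: "real^'n \<Rightarrow> real^'m" and Fa :: "real^'n \<Rightarrow> real^'m"
    and a :: "real^'n^'m \<Rightarrow> real^'n^'m" and B :: "real^'m^'m"
  assumes Vw: "Vhm \<T> \<Omega> w" and Vv: "Vhm \<T> \<Omega> v" and fin: "finite \<T>" and cv: "\<forall>S\<in>\<T>. convex S"
    and cov: "\<Omega> \<subseteq> \<Union>\<T>" and bd: "bounded \<Omega>" and op: "open \<Omega>" and dt: "dt > 0"
    and Bm: "\<And>y. (B *v y) \<bullet> y \<ge> 0" and an: "\<And>\<xi>. 0 \<le> a \<xi> \<bullet> \<xi>"
    and sch: "(LINT x:\<Omega>|lebesgue. ((1 / dt) *\<^sub>R (w x - v x)) \<bullet> w x
        + a (jacobian w (at x)) \<bullet> jacobian w (at x) + (B *v w x) \<bullet> w x) = (LINT x:\<Omega>|lebesgue. Fa x \<bullet> w x)"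
  shows "L2sq \<Omega> w - L2sq \<Omega> v + L2sq \<Omega> (\<lambda>x. w x - v x)
     + 2 * dt * (LINT x:\<Omega>|lebesgue. a (jacobian w (at x)) \<bullet> jacobian w (at x))
     \<le> 2 * dt * (LINT x:\<Omega>|lebesgue. Fa x \<bullet> w x)"
proof -
  have Oleb: "\<Omega> \<in> sets lebesgue" using op by simp
  have wc: "continuous_on UNIV w" by (rule Vhm_cont[OF Vw])
  have vc: "continuous_on UNIV v" by (rule Vhm_cont[OF Vv])
  have Bwc: "continuous_on UNIV (\<lambda>x. B *v w x)"
    using continuous_on_compose[OF wc matrix_vector_mult_linear_continuous_on[of "range w" B]] by (simp add: o_def)
  define P1 where "P1 = (\<lambda>x. ((1 / dt) *\<^sub>R (w x - v x)) \<bullet> w x)"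
  define P2 where "P2 = (\<lambda>x. a (jacobian w (at x)) \<bullet> jacobian w (at x))"
  define P3 where "P3 = (\<lambda>x. (B *v w x) \<bullet> w x)"
  have i1: "set_integrable lebesgue \<Omega> P1" unfolding P1_def
    by (rule cont_set_int) (use wc vc bd Oleb dt in \<open>auto intro!: continuous_intros\<close>)
  have i2: "set_integrable lebesgue \<Omega> P2" unfolding P2_def
    using jac_int[OF Vw fin cv cov bd op, of "\<lambda>M. a M \<bullet> M"] by simp
  have i3: "set_integrable lebesgue \<Omega> P3" unfolding P3_def
    by (rule cont_set_int) (use wc Bwc bd Oleb in \<open>auto intro!: continuous_intros\<close>)
  have iw: "set_integrable lebesgue \<Omega> (\<lambda>x. (norm (w x))\<^sup>2)"
    by (rule cont_set_int) (use wc bd Oleb in \<open>auto intro!: continuous_intros\<close>)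
  have iv: "set_integrable lebesgue \<Omega> (\<lambda>x. (norm (v x))\<^sup>2)"
    by (rule cont_set_int) (use vc bd Oleb in \<open>auto intro!: continuous_intros\<close>)
  have iwv: "set_integrable lebesgue \<Omega> (\<lambda>x. (norm (w x - v x))\<^sup>2)"
    by (rule cont_set_int) (use wc vc bd Oleb in \<open>auto intro!: continuous_intros\<close>)
  have P1eq: "P1 x = (1 / (2 * dt)) * (((norm (w x))\<^sup>2 - (norm (v x))\<^sup>2) + (norm (w x - v x))\<^sup>2)" for x
  proof -
    have "(norm (w x - v x))\<^sup>2 = (norm (w x))\<^sup>2 - 2 * (v x \<bullet> w x) + (norm (v x))\<^sup>2"
      unfolding power2_norm_eq_inner by (simp add: inner_diff_left inner_diff_right inner_commute[of "w x" "v x"])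
    thus ?thesis using dt unfolding P1_def power2_norm_eq_inner
      by (simp add: inner_diff_left inner_diff_right inner_commute[of "w x" "v x"] field_simps)
  qed
  have IP1: "(LINT x:\<Omega>|lebesgue. P1 x) = (1 / (2 * dt)) * (L2sq \<Omega> w - L2sq \<Omega> v + L2sq \<Omega> (\<lambda>x. w x - v x))"
  proof -
    have "(LINT x:\<Omega>|lebesgue. P1 x) = (1 / (2 * dt)) * (LINT x:\<Omega>|lebesgue. ((norm (w x))\<^sup>2 - (norm (v x))\<^sup>2) + (norm (w x - v x))\<^sup>2)"
      unfolding P1eq by simp
    also have "(LINT x:\<Omega>|lebesgue. ((norm (w x))\<^sup>2 - (norm (v x))\<^sup>2) + (norm (w x - v x))\<^sup>2)
       = (LINT x:\<Omega>|lebesgue. (norm (w x))\<^sup>2 - (norm (v x))\<^sup>2) + (LINT x:\<Omega>|lebesgue. (norm (w x - v x))\<^sup>2)"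
      using iw iv iwv by (intro set_integral_add(2)) auto
    also have "(LINT x:\<Omega>|lebesgue. (norm (w x))\<^sup>2 - (norm (v x))\<^sup>2) = L2sq \<Omega> w - L2sq \<Omega> v"
      using iw iv by (simp add: set_integral_diff(2) L2sq_def)
    finally show ?thesis by (simp add: L2sq_def)
  qed
  have I3: "0 \<le> (LINT x:\<Omega>|lebesgue. P3 x)"
    unfolding set_lebesgue_integral_def P3_def using Bm by (intro integral_nonneg_AE AE_I2) (simp add: indicator_def)
  have "(LINT x:\<Omega>|lebesgue. Fa x \<bullet> w x) = (LINT x:\<Omega>|lebesgue. P1 x + P2 x + P3 x)"
    using sch by (simp add: P1_def P2_def P3_def)
  also have "\<dots> = (LINT x:\<Omega>|lebesgue. P1 x) + (LINT x:\<Omega>|lebesgue. P2 x) + (LINT x:\<Omega>|lebesgue. P3 x)"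
    using i1 i2 i3 by (simp add: set_integral_add(2))
  finally have "(LINT x:\<Omega>|lebesgue. Fa x \<bullet> w x) \<ge> (1 / (2 * dt)) * (L2sq \<Omega> w - L2sq \<Omega> v + L2sq \<Omega> (\<lambda>x. w x - v x)) + (LINT x:\<Omega>|lebesgue. P2 x)"
    using IP1 I3 by linarith
  hence "2 * dt * (LINT x:\<Omega>|lebesgue. Fa x \<bullet> w x) \<ge> 2 * dt * ((1 / (2 * dt)) * (L2sq \<Omega> w - L2sq \<Omega> v + L2sq \<Omega> (\<lambda>x. w x - v x)) + (LINT x:\<Omega>|lebesgue. P2 x))"
    using dt by (intro mult_left_mono) auto
  moreover have "2 * dt * ((1 / (2 * dt)) * (L2sq \<Omega> w - L2sq \<Omega> v + L2sq \<Omega> (\<lambda>x. w x - v x)) + (LINT x:\<Omega>|lebesgue. P2 x))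
     = (L2sq \<Omega> w - L2sq \<Omega> v + L2sq \<Omega> (\<lambda>x. w x - v x)) + 2 * dt * (LINT x:\<Omega>|lebesgue. P2 x)"
    using dt by (simp add: algebra_simps)
  ultimately show ?thesis by (simp add: P2_def)
qed



lemma ind_sum_le1:
  assumes dt: "dt > 0"
  shows "(\<Sum>i=1..N. indicator {(real i - 1)*dt<..<real i*dt} t) \<le> (1::real)"
proof (cases "\<exists>i\<in>{1..N}. t \<in> {(real i - 1)*dt<..<real i*dt}")
  case False
  hence "(\<Sum>i=1..N. indicator {(real i - 1)*dt<..<real i*dt} t) = (0::real)"
    by (intro sum.neutral) auto
  thus ?thesis by simp
next
  case True
  then obtain i0 where i0: "i0 \<in> {1..N}" "t \<in> {(real i0 - 1)*dt<..<real i0*dt}" by blast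
  have uniq: "i = i0" if "i \<in> {1..N}" "t \<in> {(real i - 1)*dt<..<real i*dt}" for i
  proof -
    have "(real i - 1) * dt < real i0 * dt" "(real i0 - 1) * dt < real i * dt" using that i0 by auto
    hence "real i - 1 < real i0" "real i0 - 1 < real i" using dt by (simp_all add: mult_less_cancel_right_pos)
    thus ?thesis by linarith
  qed
  have "(\<Sum>i=1..N. indicator {(real i - 1)*dt<..<real i*dt} t) = indicator {(real i0 - 1)*dt<..<real i0*dt} t + (\<Sum>i\<in>{1..N}-{i0}. indicator {(real i - 1)*dt<..<real i*dt} t :: real)"
    using i0 by (simp add: sum.remove)
  also have "(\<Sum>i\<in>{1..N}-{i0}. indicator {(real i - 1)*dt<..<real i*dt} t :: real) = 0"
    using uniq by (intro sum.neutral) (auto simp: indicator_def)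
  finally show ?thesis by (simp add: indicator_def)
qed

lemma sum_R:
  fixes Phi :: "real \<times> (real^'n) \<Rightarrow> real"
  assumes iP: "integrable (lborel \<Otimes>\<^sub>M lborel) Phi" and nn: "\<And>z. 0 \<le> Phi z" and dt: "dt > 0"
  shows "(\<Sum>i=1..N. \<integral>z. indicator ({(real i - 1)*dt<..<real i*dt} \<times> UNIV) z * Phi z \<partial>(lborel \<Otimes>\<^sub>M lborel))
     \<le> integral\<^sup>L (lborel \<Otimes>\<^sub>M lborel) Phi"
proof -
  have ii: "integrable (lborel \<Otimes>\<^sub>M lborel) (\<lambda>z. indicator ({(real i - 1)*dt<..<real i*dt} \<times> (UNIV::(real^'n) set)) z * Phi z)" for i
  proof -
    have "{(real i - 1)*dt<..<real i*dt} \<times> (UNIV::(real^'n) set) \<in> sets (lborel \<Otimes>\<^sub>M lborel)" by auto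
    from integrable_real_mult_indicator[OF this iP] show ?thesis by (simp add: mult.commute)
  qed
  have "(\<Sum>i=1..N. \<integral>z. indicator ({(real i - 1)*dt<..<real i*dt} \<times> UNIV) z * Phi z \<partial>(lborel \<Otimes>\<^sub>M lborel))
     = (\<integral>z. (\<Sum>i=1..N. indicator ({(real i - 1)*dt<..<real i*dt} \<times> (UNIV::(real^'n) set)) z * Phi z) \<partial>(lborel \<Otimes>\<^sub>M lborel))"
    using ii by (intro Bochner_Integration.integral_sum[symmetric]) auto
  also have "\<dots> \<le> integral\<^sup>L (lborel \<Otimes>\<^sub>M lborel) Phi"
  proof (rule integral_mono)
    show "integrable (lborel \<Otimes>\<^sub>M lborel) (\<lambda>z. \<Sum>i=1..N. indicator ({(real i - 1)*dt<..<real i*dt} \<times> (UNIV::(real^'n) set)) z * Phi z)"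
      by (rule Bochner_Integration.integrable_sum) (rule ii)
    show "integrable (lborel \<Otimes>\<^sub>M lborel) Phi" by (rule iP)
    fix z :: "real \<times> (real^'n)"
    have "(\<Sum>i=1..N. indicator ({(real i - 1)*dt<..<real i*dt} \<times> (UNIV::(real^'n) set)) z * Phi z)
        = (\<Sum>i=1..N. indicator {(real i - 1)*dt<..<real i*dt} (fst z)) * Phi z"
    proof -
      have ieq: "indicator ({(real i - 1)*dt<..<real i*dt} \<times> (UNIV::(real^'n) set)) z = (indicator {(real i - 1)*dt<..<real i*dt} (fst z) :: real)" for i
        by (cases z) (simp add: indicator_def)
      have "(\<Sum>i=1..N. indicator ({(real i - 1)*dt<..<real i*dt} \<times> (UNIV::(real^'n) set)) z * Phi z) = (\<Sum>i=1..N. indicator {(real i - 1)*dt<..<real i*dt} (fst z) * Phi z)"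
        by (simp only: ieq)
      also have "\<dots> = (\<Sum>i=1..N. indicator {(real i - 1)*dt<..<real i*dt} (fst z)) * Phi z"
        by (rule sum_distrib_right[symmetric])
      finally show ?thesis .
    qed
    also have "\<dots> \<le> 1 * Phi z" using ind_sum_le1[OF dt, where N=N and t="fst z"] nn[of z] by (intro mult_right_mono) auto
    finally show "(\<Sum>i=1..N. indicator ({(real i - 1)*dt<..<real i*dt} \<times> (UNIV::(real^'n) set)) z * Phi z) \<le> Phi z" by simp
  qed
  finally show ?thesis .
qed

lemma L2_bound:
  fixes v f :: "real^'n \<Rightarrow> real^'m"
  assumes mf: "(\<lambda>x. indicator \<Omega> x *\<^sub>R f x) \<in> borel_measurable lebesgue"
    and if2: "integrable lebesgue (\<lambda>x. indicator \<Omega> x * (norm (f x))\<^sup>2)"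
    and vc: "continuous_on UNIV v" and bd: "bounded \<Omega>" and Oleb: "\<Omega> \<in> sets lebesgue"
  shows "L2sq \<Omega> v \<le> 2 * L2sq \<Omega> (\<lambda>x. v x - f x) + 2 * L2sq \<Omega> f"
proof -
  have iv: "integrable lebesgue (\<lambda>x. indicator \<Omega> x * (norm (v x))\<^sup>2)"
  proof -
    have "continuous_on UNIV (\<lambda>x. (norm (v x))\<^sup>2)" using vc by (intro continuous_intros)
    thus ?thesis using cont_set_int[of "\<lambda>x. (norm (v x))\<^sup>2" \<Omega>] bd Oleb by (simp add: set_integrable_def)
  qed
  have mv0: "v \<in> borel_measurable lebesgue"
    using borel_measurable_continuous_onI[OF vc] by (intro measurable_completion) (simp add: measurable_lborel1)
  have mv: "(\<lambda>x. indicator \<Omega> x *\<^sub>R v x) \<in> borel_measurable lebesgue"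
    using mv0 Oleb by (intro borel_measurable_scaleR borel_measurable_indicator) auto
  have eqd: "(\<lambda>x. indicator \<Omega> x * (norm (v x - f x))\<^sup>2) = (\<lambda>x. (norm (indicator \<Omega> x *\<^sub>R v x - indicator \<Omega> x *\<^sub>R f x))\<^sup>2)"
    by (auto simp: fun_eq_iff indicator_def)
  have md: "(\<lambda>x. indicator \<Omega> x * (norm (v x - f x))\<^sup>2) \<in> borel_measurable lebesgue"
    unfolding eqd using mv mf by (intro borel_measurable_power borel_measurable_norm borel_measurable_diff) auto
  have pw: "(norm y)\<^sup>2 \<le> 2 * (norm (y - z))\<^sup>2 + 2 * (norm z)\<^sup>2" for y z :: "real^'m"
  proof -
    have "norm y \<le> norm (y - z) + norm z" using norm_triangle_ineq[of "y - z" z] by simp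
    hence "(norm y)\<^sup>2 \<le> (norm (y - z) + norm z)\<^sup>2" by (intro power_mono) auto
    also have "\<dots> \<le> 2 * (norm (y - z))\<^sup>2 + 2 * (norm z)\<^sup>2"
    proof -
      have "0 \<le> (norm (y - z) - norm z)\<^sup>2" by simp
      thus ?thesis by (simp add: power2_eq_square algebra_simps)
    qed
    finally show ?thesis .
  qed
  have id: "integrable lebesgue (\<lambda>x. indicator \<Omega> x * (norm (v x - f x))\<^sup>2)"
  proof (rule Bochner_Integration.integrable_bound[OF _ md])
    show "integrable lebesgue (\<lambda>x. 2 * (indicator \<Omega> x * (norm (v x))\<^sup>2) + 2 * (indicator \<Omega> x * (norm (f x))\<^sup>2))"
      using iv if2 by (intro Bochner_Integration.integrable_add integrable_mult_right) auto
    show "AE x in lebesgue. norm (indicator \<Omega> x * (norm (v x - f x))\<^sup>2) \<le> norm (2 * (indicator \<Omega> x * (norm (v x))\<^sup>2) + 2 * (indicator \<Omega> x * (norm (f x))\<^sup>2))"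
    proof (intro AE_I2)
      fix x
      have "(norm (v x - f x))\<^sup>2 \<le> 2 * (norm (v x))\<^sup>2 + 2 * (norm (f x))\<^sup>2"
        using pw[of "v x - f x" "- f x"] by simp
      thus "norm (indicator \<Omega> x * (norm (v x - f x))\<^sup>2) \<le> norm (2 * (indicator \<Omega> x * (norm (v x))\<^sup>2) + 2 * (indicator \<Omega> x * (norm (f x))\<^sup>2))"
        by (auto simp: indicator_def)
    qed
  qed
  have "L2sq \<Omega> v = (\<integral>x. indicator \<Omega> x * (norm (v x))\<^sup>2 \<partial>lebesgue)" by (simp add: L2sq_def set_lebesgue_integral_def)
  also have "\<dots> \<le> (\<integral>x. 2 * (indicator \<Omega> x * (norm (v x - f x))\<^sup>2) + 2 * (indicator \<Omega> x * (norm (f x))\<^sup>2) \<partial>lebesgue)"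
  proof (rule integral_mono[OF iv])
    show "integrable lebesgue (\<lambda>x. 2 * (indicator \<Omega> x * (norm (v x - f x))\<^sup>2) + 2 * (indicator \<Omega> x * (norm (f x))\<^sup>2))"
      using id if2 by (intro Bochner_Integration.integrable_add integrable_mult_right) auto
    fix x show "indicator \<Omega> x * (norm (v x))\<^sup>2 \<le> 2 * (indicator \<Omega> x * (norm (v x - f x))\<^sup>2) + 2 * (indicator \<Omega> x * (norm (f x))\<^sup>2)"
      using pw[of "v x" "f x"] by (auto simp: indicator_def)
  qed
  also have "\<dots> = 2 * L2sq \<Omega> (\<lambda>x. v x - f x) + 2 * L2sq \<Omega> f"
    using id if2 by (simp add: L2sq_def set_lebesgue_integral_def)
  finally show ?thesis .
qed



theorem lemma4p1:
  fixes \<Omega> :: "(real^'n) set" and T h0 c0 c1 :: real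
    and p \<mu> :: "'m::finite \<Rightarrow> real"
    and u0 :: "real^'n \<Rightarrow> real^'m"
    and F :: "real \<Rightarrow> real^'n \<Rightarrow> real^'m"
    and B :: "real^'m^'m"
    and a :: "real^'n^'m \<Rightarrow> real^'n^'m"
    and K :: "real^'n^'m \<Rightarrow> real"
    and \<T> :: "real \<Rightarrow> (real^'n) set set"
    and u0h :: "real \<Rightarrow> real^'n \<Rightarrow> real^'m"
  assumes Omega: "lipschitz_polytope \<Omega>"
    and T_pos: "T > 0"
    and p_gt: "\<And>i. p i > max 1 (2 * real CARD('n) / (real CARD('n) + 2))"
    and q_p: "Max (range p) - Min (range p) < 1"
    and u0_L2: "Lp_on lebesgue \<Omega> 2 u0"
    and F_Lp': "Lp_on (lborel \<Otimes>\<^sub>M lborel) (QT T \<Omega>)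
                  (Min (range p) / (Min (range p) - 1)) (\<lambda>(t, x). F t x)"
    and F_L2: "Lp_on (lborel \<Otimes>\<^sub>M lborel) (QT T \<Omega>) 2 (\<lambda>(t, x). F t x)"
    and B_mon: "\<And>v. (B *v v) \<bullet> v \<ge> 0"
    and a_loclip: "\<And>A. \<exists>r>0. \<exists>L. \<forall>X\<in>ball A r. \<forall>Y\<in>ball A r. norm (a X - a Y) \<le> L * norm (X - Y)"
    and a_K: "\<And>A. a A = K A *\<^sub>R A"
    and K_cont: "continuous_on UNIV K"
    and c0_pos: "0 < c0" and c0_c1: "c0 \<le> c1"
    and K_lower: "\<And>A. c0 * (\<Sum>i\<in>UNIV. pw ((\<mu> i)\<^sup>2 + (norm (A $ i))\<^sup>2) ((p i - 2) / 2)) \<le> K A"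
    and K_upper: "\<And>A. K A \<le> c1 * (\<Sum>i\<in>UNIV. pw ((\<mu> i)\<^sup>2 + (norm (A $ i))\<^sup>2) ((p i - 2) / 2))"
    and mu_nz: "\<And>i. p i < 2 \<Longrightarrow> \<mu> i \<noteq> 0"
    and h0_pos: "h0 > 0"
    and mesh: "\<And>h. h \<in> {0<..h0} \<Longrightarrow> simplicial_subdivision (\<T> h) \<Omega> h"
    and shape_reg: "shape_regular_family \<T> h0"
    and proj_stab: "projection_stable \<Omega> \<T> h0 (max (Max (range p)) 2) TYPE(real^'m)"
    and u0h_V: "\<And>h. h \<in> {0<..h0} \<Longrightarrow> Vhm (\<T> h) \<Omega> (u0h h)"
    and u0h_conv: "((\<lambda>h. L2sq \<Omega> (\<lambda>x. u0h h x - u0 x)) \<longlongrightarrow> 0) (at_right 0)"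
  shows "(\<exists>c>0. \<forall>h\<in>{0<..h0}. \<forall>(N::nat) (u::nat \<Rightarrow> real^'n \<Rightarrow> real^'m).
            N \<ge> 1 \<longrightarrow> u 0 = u0h h \<longrightarrow> (\<forall>i\<in>{1..N}. Vhm (\<T> h) \<Omega> (u i)) \<longrightarrow>
            fd_scheme (\<T> h) \<Omega> a B F (T / real N) N u \<longrightarrow>
              (MAX i\<in>{1..N}. L2sq \<Omega> (u i))
              + (\<Sum>i=1..N. L2sq \<Omega> (\<lambda>x. u i x - u (i - 1) x))
              + (T / real N) * (\<Sum>i=1..N. LINT x:\<Omega>|lebesgue.
                    a (jacobian (u i) (at x)) \<bullet> jacobian (u i) (at x))
              \<le> c * (L2sq \<Omega> (u0h h)
                     + T * (LINT z:QT T \<Omega>|(lborel \<Otimes>\<^sub>M lborel). (norm (F (fst z) (snd z)))\<^sup>2)))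
         \<and> (\<forall>\<xi>. a \<xi> \<bullet> \<xi> \<ge> 0)
         \<and> (\<exists>C. eventually (\<lambda>h. L2sq \<Omega> (u0h h)
                     + T * (LINT z:QT T \<Omega>|(lborel \<Otimes>\<^sub>M lborel). (norm (F (fst z) (snd z)))\<^sup>2) \<le> C)
                 (at_right 0))"
proof -
  have LD: "lipschitz_domain \<Omega>" using Omega by (simp add: lipschitz_polytope_def)
  hence op: "open \<Omega>" and bd: "bounded \<Omega>" by (simp_all add: lipschitz_domain_def)
  have Oleb: "\<Omega> \<in> sets lebesgue" using op by simp
  have an: "0 \<le> a \<xi> \<bullet> \<xi>" for \<xi>
  proof -
    have "0 \<le> (\<Sum>i\<in>UNIV. pw ((\<mu> i)\<^sup>2 + (norm (\<xi> $ i))\<^sup>2) ((p i - 2) / 2))"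
      by (intro sum_nonneg) (simp add: pw_def)
    hence "0 \<le> c0 * (\<Sum>i\<in>UNIV. pw ((\<mu> i)\<^sup>2 + (norm (\<xi> $ i))\<^sup>2) ((p i - 2) / 2))"
      using c0_pos by simp
    hence "0 \<le> K \<xi>" using K_lower[of \<xi>] by linarith
    thus "0 \<le> a \<xi> \<bullet> \<xi>" by (simp add: a_K)
  qed
  define Phi where "Phi = (\<lambda>z. indicator (QT T \<Omega>) z * (norm (F (fst z) (snd z)))\<^sup>2)"
  have measF: "(\<lambda>z. indicator (QT T \<Omega>) z *\<^sub>R (case z of (t,x) \<Rightarrow> F t x)) \<in> borel_measurable (lborel \<Otimes>\<^sub>M lborel)"
    using F_L2 by (simp add: Lp_on_def)
  have intPhi: "integrable (lborel \<Otimes>\<^sub>M lborel) Phi"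
  proof -
    have "integrable (lborel \<Otimes>\<^sub>M lborel) (\<lambda>z. indicator (QT T \<Omega>) z * norm ((\<lambda>(t, x). F t x) z) powr 2)"
      using F_L2 by (simp add: Lp_on_def)
    moreover have "(\<lambda>z. indicator (QT T \<Omega>) z * norm ((\<lambda>(t, x). F t x) z) powr 2) = Phi"
      by (auto simp: Phi_def fun_eq_iff split: prod.split)
    ultimately show ?thesis by simp
  qed
  have Phinn: "\<And>z. 0 \<le> Phi z" by (simp add: Phi_def)
  define S where "S = (LINT z:QT T \<Omega>|(lborel \<Otimes>\<^sub>M lborel). (norm (F (fst z) (snd z)))\<^sup>2)"
  have S_eq: "S = integral\<^sup>L (lborel \<Otimes>\<^sub>M lborel) Phi" by (simp add: S_def Phi_def set_lebesgue_integral_def)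
  have L2nn: "0 \<le> L2sq \<Omega> f" for f :: "real^'n \<Rightarrow> real^'m"
    unfolding L2sq_def set_lebesgue_integral_def by (intro integral_nonneg_AE AE_I2) simp
  have part1: "\<forall>h\<in>{0<..h0}. \<forall>(N::nat) (u::nat \<Rightarrow> real^'n \<Rightarrow> real^'m).
            N \<ge> 1 \<longrightarrow> u 0 = u0h h \<longrightarrow> (\<forall>i\<in>{1..N}. Vhm (\<T> h) \<Omega> (u i)) \<longrightarrow>
            fd_scheme (\<T> h) \<Omega> a B F (T / real N) N u \<longrightarrow>
              (MAX i\<in>{1..N}. L2sq \<Omega> (u i))
              + (\<Sum>i=1..N. L2sq \<Omega> (\<lambda>x. u i x - u (i - 1) x))
              + (T / real N) * (\<Sum>i=1..N. LINT x:\<Omega>|lebesgue.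
                    a (jacobian (u i) (at x)) \<bullet> jacobian (u i) (at x))
              \<le> 8 * (L2sq \<Omega> (u0h h) + T * S)"
  proof (intro ballI allI impI)
    fix h N and u :: "nat \<Rightarrow> real^'n \<Rightarrow> real^'m"
    assume h: "h \<in> {0<..h0}" and N: "1 \<le> N" and u0: "u 0 = u0h h"
      and Vu: "\<forall>i\<in>{1..N}. Vhm (\<T> h) \<Omega> (u i)" and sch: "fd_scheme (\<T> h) \<Omega> a B F (T / real N) N u"
    define dt where "dt = T / real N"
    have dt: "dt > 0" using N T_pos by (simp add: dt_def)
    have NT: "real N * dt = T" using N by (simp add: dt_def)
    have sub: "simplicial_subdivision (\<T> h) \<Omega> h" using mesh h by auto
    have fin: "finite (\<T> h)" and cv: "\<forall>S\<in>\<T> h. convex S" and cov: "\<Omega> \<subseteq> \<Union>(\<T> h)"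
      using sub closure_subset[of \<Omega>] by (auto simp: simplicial_subdivision_def triangulation_def intro: convex_simplex)
    have Vall: "Vhm (\<T> h) \<Omega> (u i)" if "i \<le> N" for i
      using Vu that u0 u0h_V[OF h] by (cases "i = 0") auto
    define e where "e = (\<lambda>i. L2sq \<Omega> (u i))"
    define d where "d = (\<lambda>i. L2sq \<Omega> (\<lambda>x. u i x - u (i - 1) x))"
    define A where "A = (\<lambda>i. LINT x:\<Omega>|lebesgue. a (jacobian (u i) (at x)) \<bullet> jacobian (u i) (at x))"
    define R where "R = (\<lambda>i::nat. \<integral>z. indicator ({(real i - 1) * dt<..<real i * dt} \<times> UNIV) z * Phi z \<partial>(lborel \<Otimes>\<^sub>M lborel))"
    have step: "e i - e (i-1) + d i + 2*dt*A i \<le> 2*T*R i + dt/(2*T) * e i" if i: "i \<in> {1..N}" for i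
    proof -
      have im: "i - 1 < N" and si: "Suc (i - 1) = i" and i1: "1 \<le> i" using i by auto
      have Vi: "Vhm (\<T> h) \<Omega> (u i)" and Vi1: "Vhm (\<T> h) \<Omega> (u (i-1))" using Vall i by auto
      have sch_i: "(LINT x:\<Omega>|lebesgue. ((1 / dt) *\<^sub>R (u i x - u (i-1) x)) \<bullet> u i x
          + a (jacobian (u i) (at x)) \<bullet> jacobian (u i) (at x) + (B *v u i x) \<bullet> u i x)
          = (LINT x:\<Omega>|lebesgue. F_avg F dt i x \<bullet> u i x)"
        using sch[unfolded fd_scheme_def, rule_format, OF im Vi] unfolding si dt_def .
      have s1: "e i - e (i-1) + d i + 2*dt*A i \<le> 2*dt*(LINT x:\<Omega>|lebesgue. F_avg F dt i x \<bullet> u i x)"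
        using step_ineq[OF Vi Vi1 fin cv cov bd op dt B_mon an sch_i] by (simp add: e_def d_def A_def)
      have iT: "real i * dt \<le> T" using i NT dt by (simp add: mult_right_mono flip: NT)
      have lam: "2 * T > 0" using T_pos by simp
      have s2: "(LINT x:\<Omega>|lebesgue. F_avg F dt i x \<bullet> u i x) \<le> (2*T) / (2*dt) * R i + e i / (2*(2*T))"
        using F_step[OF measF intPhi[unfolded Phi_def] Vhm_cont[OF Vi] bd op i1 dt iT lam]
        by (simp add: R_def Phi_def e_def)
      have "2*dt*(LINT x:\<Omega>|lebesgue. F_avg F dt i x \<bullet> u i x) \<le> 2*dt*((2*T) / (2*dt) * R i + e i / (2*(2*T)))"
        using s2 dt by (intro mult_left_mono) auto
      also have "\<dots> = 2*T*R i + dt/(2*T) * e i" using dt T_pos by (simp add: field_simps)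
      finally show ?thesis using s1 by linarith
    qed
    have RS: "(\<Sum>i=1..N. R i) \<le> S" using sum_R[OF intPhi Phinn dt, where N=N] by (simp add: R_def S_eq)
    have An: "0 \<le> A i" for i unfolding A_def set_lebesgue_integral_def
      using an by (intro integral_nonneg_AE AE_I2) simp
    have Rn: "0 \<le> R i" for i unfolding R_def using Phinn by (intro integral_nonneg_AE AE_I2) simp
    have "(MAX i\<in>{1..N}. e i) + (\<Sum>i=1..N. d i) + dt * (\<Sum>i=1..N. A i) \<le> 8 * (e 0 + T * S)"
      by (rule energy_alg[OF N dt NT step _ _ An Rn RS]) (simp_all add: e_def d_def L2nn)
    thus "(MAX i\<in>{1..N}. L2sq \<Omega> (u i))
              + (\<Sum>i=1..N. L2sq \<Omega> (\<lambda>x. u i x - u (i - 1) x))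
              + (T / real N) * (\<Sum>i=1..N. LINT x:\<Omega>|lebesgue.
                    a (jacobian (u i) (at x)) \<bullet> jacobian (u i) (at x))
              \<le> 8 * (L2sq \<Omega> (u0h h) + T * S)"
      by (simp add: e_def d_def A_def dt_def u0)
  qed
  have part3: "\<exists>C. eventually (\<lambda>h. L2sq \<Omega> (u0h h) + T * S \<le> C) (at_right 0)"
  proof -
    have mf: "(\<lambda>x. indicator \<Omega> x *\<^sub>R u0 x) \<in> borel_measurable lebesgue" using u0_L2 by (simp add: Lp_on_def)
    have if2: "integrable lebesgue (\<lambda>x. indicator \<Omega> x * (norm (u0 x))\<^sup>2)" using u0_L2 by (simp add: Lp_on_def)
    have ev1: "eventually (\<lambda>h. L2sq \<Omega> (\<lambda>x. u0h h x - u0 x) < 1) (at_right 0)"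
      using order_tendstoD(2)[OF u0h_conv] by simp
    have ev2: "eventually (\<lambda>h. h \<in> {0<..h0}) (at_right (0::real))"
      unfolding eventually_at_right[OF h0_pos] by (intro exI[of _ h0]) (auto simp: h0_pos)
    show ?thesis
    proof (intro exI[of _ "2 + 2 * L2sq \<Omega> u0 + T * S"])
      show "eventually (\<lambda>h. L2sq \<Omega> (u0h h) + T * S \<le> 2 + 2 * L2sq \<Omega> u0 + T * S) (at_right 0)"
        using ev1 ev2
      proof eventually_elim
        case (elim h)
        have "L2sq \<Omega> (u0h h) \<le> 2 * L2sq \<Omega> (\<lambda>x. u0h h x - u0 x) + 2 * L2sq \<Omega> u0"
          by (rule L2_bound[OF mf if2 Vhm_cont[OF u0h_V[OF elim(2)]] bd Oleb])
        thus ?case using elim(1) by linarith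
      qed
    qed
  qed
  show ?thesis
    apply (intro conjI)
      apply (rule exI[of _ "8::real"])
      apply (intro conjI)
       apply simp
      apply (rule part1[unfolded S_def])
     apply (intro allI an)
    apply (rule part3[unfolded S_def])
    done
qed


end
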